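(* Let $\alpha>0$, $\beta,\eta,\kappa\in\mathbb{R}$, $\rho>0$, $p\geq 1$, and $0\le a<x$. Let $f,g$ be two positive functions on $[0,\infty)$ with $f,g\in X^{p}_{c}(a,x)$ (for some $c\in\mathbb{R}$), such that ${}^{\rho}\mathcal{I}^{\alpha,\beta}_{a+,\eta,\kappa}f^{p}(x)<\infty$ and ${}^{\rho}\mathcal{I}^{\alpha,\beta}_{a+,\eta,\kappa}g^{p}(x)<\infty$. Suppose there are real numbers $a_1,A,b_1,B$ with $0\leq a_1\leq f(t)\leq A$ and $0\leq b_1\leq g(t)\leq B$ for all $t\in[a,x]$. Then $$\left({}^{\rho}\mathcal{I}^{\alpha,\beta}_{a+,\eta,\kappa}f^{p}(x)\right)^{1/p}+\left({}^{\rho}\mathcal{I}^{\alpha,\beta}_{a+,\eta,\kappa}g^{p}(x)\right)^{1/p}\leq c_{5}\left({}^{\rho}\mathcal{I}^{\alpha,\beta}_{a+,\eta,\kappa}(f+g)^{p}(x)\right)^{1/p},$$ where $c_{5}=\frac{A(a_1+B)+B(A+b_1)}{(A+b_1)(a_1+B)}$.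
   Context: For $c\in\mathbb{R}$ and $1\le p<\infty$, $X^{p}_{c}(a,b)$ denotes the space of Lebesgue measurable functions $f$ on $(a,b)$ with $\left(\int_a^b |t^{c}f(t)|^{p}\,\frac{dt}{t}\right)^{1/p}<\infty$. For $\alpha>0$, $\beta,\eta,\kappa\in\mathbb{R}$, $\rho>0$, $0\le a<x$, and a function $\varphi$, the generalized (Katugampola) fractional integral is $${}^{\rho}\mathcal{I}^{\alpha,\beta}_{a+,\eta,\kappa}\varphi(x)=\frac{\rho^{1-\beta}x^{\kappa}}{\Gamma(\alpha)}\int_{a}^{x}\frac{\tau^{\rho(\eta+1)-1}}{(x^{\rho}-\tau^{\rho})^{1-\alpha}}\varphi(\tau)\,d\tau,$$ whenever the integral exists. Notation such as ${}^{\rho}\mathcal{I}^{\alpha,\beta}_{a+,\eta,\kappa}(f+g)^{p}(x)$ means the operator applied to $\tau\mapsto(f(\tau)+g(\tau))^p$, evaluated at $x$. *)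

theory Defs
  imports "HOL-Analysis.Analysis"
begin

definition Xpc :: "real \<Rightarrow> real \<Rightarrow> real \<Rightarrow> real \<Rightarrow> (real \<Rightarrow> real) \<Rightarrow> bool" where
  "Xpc c p a b f \<longleftrightarrow>
     set_borel_measurable lborel {a<..<b} f \<and>
     (\<integral>\<^sup>+ t \<in> {a<..<b}. ennreal (\<bar>t powr c * f t\<bar> powr p / t) \<partial>lborel) < \<infinity>"

definition katu_kernel :: "real \<Rightarrow> real \<Rightarrow> real \<Rightarrow> real \<Rightarrow> real \<Rightarrow> real" where
  "katu_kernel \<rho> \<alpha> \<eta> x \<tau> =
     \<tau> powr (\<rho> * (\<eta> + 1) - 1) / (x powr \<rho> - \<tau> powr \<rho>) powr (1 - \<alpha>)"

definition katu_exists :: "real \<Rightarrow> real \<Rightarrow> real \<Rightarrow> real \<Rightarrow> real \<Rightarrow> (real \<Rightarrow> real) \<Rightarrow> bool" where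
  "katu_exists \<rho> \<alpha> \<eta> a x \<phi> \<longleftrightarrow>
     set_integrable lborel {a<..<x} (\<lambda>\<tau>. katu_kernel \<rho> \<alpha> \<eta> x \<tau> * \<phi> \<tau>)"

definition katu_int ::
  "real \<Rightarrow> real \<Rightarrow> real \<Rightarrow> real \<Rightarrow> real \<Rightarrow> real \<Rightarrow> real \<Rightarrow> (real \<Rightarrow> real) \<Rightarrow> real" where
  "katu_int \<rho> \<alpha> \<beta> \<eta> \<kappa> a x \<phi> =
     \<rho> powr (1 - \<beta>) * x powr \<kappa> / Gamma \<alpha> *
     (LBINT \<tau>:{a<..<x}. katu_kernel \<rho> \<alpha> \<eta> x \<tau> * \<phi> \<tau>)"

end

theory Submission
  imports Defs
begin

lemma kernel_nonneg:
  assumes "0 \<le> a" "\<tau> \<in> {a<..<x}" "\<rho> > 0"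
  shows "0 \<le> katu_kernel \<rho> \<alpha> \<eta> x \<tau>"
  unfolding katu_kernel_def by simp

lemma kernel_meas: "(\<lambda>\<tau>. katu_kernel \<rho> \<alpha> \<eta> x \<tau>) \<in> borel_measurable lborel"
  unfolding katu_kernel_def by measurable

lemma sum_meas:
  assumes "set_borel_measurable lborel S f" "set_borel_measurable lborel S g" "p > 0"
  shows "set_borel_measurable lborel S (\<lambda>\<tau>. katu_kernel \<rho> \<alpha> \<eta> x \<tau> * (f \<tau> + g \<tau>) powr p)"
proof -
  have F[measurable]: "(\<lambda>t. indicator S t *\<^sub>R f t) \<in> borel_measurable lborel"
    and G[measurable]: "(\<lambda>t. indicator S t *\<^sub>R g t) \<in> borel_measurable lborel"
    using assms unfolding set_borel_measurable_def by auto
  have K[measurable]: "(\<lambda>\<tau>. katu_kernel \<rho> \<alpha> \<eta> x \<tau>) \<in> borel_measurable lborel"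
    by (rule kernel_meas)
  have eq: "(\<lambda>t. indicator S t *\<^sub>R (katu_kernel \<rho> \<alpha> \<eta> x t * (f t + g t) powr p)) =
     (\<lambda>t. katu_kernel \<rho> \<alpha> \<eta> x t * ((indicator S t *\<^sub>R f t) + (indicator S t *\<^sub>R g t)) powr p)"
    by (rule ext) (auto simp: indicator_def)
  show ?thesis unfolding set_borel_measurable_def eq by measurable
qed


lemma side:
  fixes u w k :: "real \<Rightarrow> real"
  assumes SI1: "set_integrable lborel S (\<lambda>\<tau>. k \<tau> * u \<tau> powr p)"
    and SI2: "set_integrable lborel S (\<lambda>\<tau>. k \<tau> * w \<tau> powr p)"
    and knn: "\<forall>\<tau>\<in>S. 0 \<le> k \<tau>"
    and bnd: "\<forall>\<tau>\<in>S. 0 \<le> u \<tau> \<and> u \<tau> \<le> c * w \<tau> \<and> 0 \<le> w \<tau>"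
    and c: "c \<ge> 0" and K: "K \<ge> 0" and p: "p > 0"
  shows "(K * (LBINT \<tau>:S. k \<tau> * u \<tau> powr p)) powr (1/p)
     \<le> c * (K * (LBINT \<tau>:S. k \<tau> * w \<tau> powr p)) powr (1/p)"
proof -
  have I1: "(LBINT \<tau>:S. k \<tau> * u \<tau> powr p) \<le> (LBINT \<tau>:S. c powr p * (k \<tau> * w \<tau> powr p))"
  proof (rule set_integral_mono[OF SI1])
    show "set_integrable lborel S (\<lambda>\<tau>. c powr p * (k \<tau> * w \<tau> powr p))"
      using SI2 by (rule set_integrable_mult_right)
    fix \<tau> assume t: "\<tau> \<in> S"
    have "u \<tau> powr p \<le> (c * w \<tau>) powr p"
      using bnd t p by (intro powr_mono2) auto
    also have "\<dots> = c powr p * w \<tau> powr p" by (rule powr_mult)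
    finally show "k \<tau> * u \<tau> powr p \<le> c powr p * (k \<tau> * w \<tau> powr p)"
      using knn t by (simp add: mult_left_mono algebra_simps)
  qed
  have nn: "0 \<le> (LBINT \<tau>:S. k \<tau> * u \<tau> powr p)"
    using set_integral_mono[of lborel S "\<lambda>_. 0" "\<lambda>\<tau>. k \<tau> * u \<tau> powr p"] SI1 knn
    by (simp add: set_integrable_def)
  have nn2: "0 \<le> (LBINT \<tau>:S. k \<tau> * w \<tau> powr p)"
    using set_integral_mono[of lborel S "\<lambda>_. 0" "\<lambda>\<tau>. k \<tau> * w \<tau> powr p"] SI2 knn
    by (simp add: set_integrable_def)
  have "K * (LBINT \<tau>:S. k \<tau> * u \<tau> powr p) \<le> c powr p * (K * (LBINT \<tau>:S. k \<tau> * w \<tau> powr p))"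
  proof -
    have I2: "(LBINT \<tau>:S. c powr p * (k \<tau> * w \<tau> powr p)) = c powr p * (LBINT \<tau>:S. k \<tau> * w \<tau> powr p)"
      by (rule set_integral_mult_right)
    show ?thesis using mult_left_mono[OF I1 K] unfolding I2 by (metis mult.left_commute)
  qed
  then have "(K * (LBINT \<tau>:S. k \<tau> * u \<tau> powr p)) powr (1/p)
      \<le> (c powr p * (K * (LBINT \<tau>:S. k \<tau> * w \<tau> powr p))) powr (1/p)"
    using nn K p by (intro powr_mono2) auto
  also have "\<dots> = (c powr p) powr (1/p) * (K * (LBINT \<tau>:S. k \<tau> * w \<tau> powr p)) powr (1/p)"
    by (rule powr_mult)
  also have "(c powr p) powr (1/p) = c"
    using c p by (cases "c = 0") (auto simp: powr_powr)
  finally show ?thesis .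
qed

theorem theorem13:
  fixes \<alpha> \<beta> \<eta> \<kappa> \<rho> p a x c a1 A b1 B :: real
    and f g :: "real \<Rightarrow> real"
  assumes "\<alpha> > 0" and "\<rho> > 0" and "p \<ge> 1" and "0 \<le> a" and "a < x"
    and "\<forall>t\<ge>0. f t > 0" and "\<forall>t\<ge>0. g t > 0"
    and "Xpc c p a x f" and "Xpc c p a x g"
    and "katu_exists \<rho> \<alpha> \<eta> a x (\<lambda>\<tau>. f \<tau> powr p)"
    and "katu_exists \<rho> \<alpha> \<eta> a x (\<lambda>\<tau>. g \<tau> powr p)"
    and "0 \<le> a1" and "0 \<le> b1"
    and "\<forall>t\<in>{a..x}. a1 \<le> f t \<and> f t \<le> A"
    and "\<forall>t\<in>{a..x}. b1 \<le> g t \<and> g t \<le> B"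
  shows "(katu_int \<rho> \<alpha> \<beta> \<eta> \<kappa> a x (\<lambda>\<tau>. f \<tau> powr p)) powr (1/p)
         + (katu_int \<rho> \<alpha> \<beta> \<eta> \<kappa> a x (\<lambda>\<tau>. g \<tau> powr p)) powr (1/p)
       \<le> ((A * (a1 + B) + B * (A + b1)) / ((A + b1) * (a1 + B)))
         * (katu_int \<rho> \<alpha> \<beta> \<eta> \<kappa> a x (\<lambda>\<tau>. (f \<tau> + g \<tau>) powr p)) powr (1/p)"
proof -
  let ?S = "{a<..<x}"
  let ?k = "katu_kernel \<rho> \<alpha> \<eta> x"
  let ?K = "\<rho> powr (1 - \<beta>) * x powr \<kappa> / Gamma \<alpha>"
  have pos: "\<And>t. t \<in> ?S \<Longrightarrow> f t > 0 \<and> g t > 0" using assms(4,6,7) by auto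
  have Apos: "A > 0" using assms(5,14) pos[of "(a+x)/2"] assms(4,6) by force
  have Bpos: "B > 0" using assms(5,15) assms(4,7) by force
  have K: "?K \<ge> 0" using assms(1) by simp
  have knn: "\<forall>\<tau>\<in>?S. 0 \<le> ?k \<tau>" using assms(2,4) kernel_nonneg by blast
  have SIf: "set_integrable lborel ?S (\<lambda>\<tau>. ?k \<tau> * f \<tau> powr p)"
    using assms(10) by (simp add: katu_exists_def)
  have SIg: "set_integrable lborel ?S (\<lambda>\<tau>. ?k \<tau> * g \<tau> powr p)"
    using assms(11) by (simp add: katu_exists_def)
  have SIfg: "set_integrable lborel ?S (\<lambda>\<tau>. ?k \<tau> * (f \<tau> + g \<tau>) powr p)"
  proof (rule set_integrable_bound[where f="\<lambda>\<tau>. 2 powr p * (?k \<tau> * f \<tau> powr p + ?k \<tau> * g \<tau> powr p)"])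
    show "set_integrable lborel ?S (\<lambda>\<tau>. 2 powr p * (?k \<tau> * f \<tau> powr p + ?k \<tau> * g \<tau> powr p))"
      by (intro set_integrable_mult_right set_integral_add(1) SIf SIg)
    show "set_borel_measurable lborel ?S (\<lambda>\<tau>. ?k \<tau> * (f \<tau> + g \<tau>) powr p)"
      using assms(8,9,3) by (intro sum_meas) (auto simp: Xpc_def)
    show "AE \<tau> in lborel. \<tau> \<in> ?S \<longrightarrow> norm (?k \<tau> * (f \<tau> + g \<tau>) powr p)
        \<le> norm (2 powr p * (?k \<tau> * f \<tau> powr p + ?k \<tau> * g \<tau> powr p))"
    proof (rule AE_I2, rule impI)
      fix \<tau> assume t: "\<tau> \<in> ?S"
      have fg: "f \<tau> > 0" "g \<tau> > 0" using pos t by auto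
      have kt: "?k \<tau> \<ge> 0" using knn t by auto
      have "(f \<tau> + g \<tau>) powr p \<le> (2 * max (f \<tau>) (g \<tau>)) powr p"
        using fg assms(3) by (intro powr_mono2) auto
      also have "\<dots> = 2 powr p * max (f \<tau>) (g \<tau>) powr p" by (rule powr_mult)
      also have "max (f \<tau>) (g \<tau>) powr p \<le> f \<tau> powr p + g \<tau> powr p"
        by (cases "f \<tau> \<le> g \<tau>") (auto simp: max_def)
      hence "2 powr p * max (f \<tau>) (g \<tau>) powr p \<le> 2 powr p * (f \<tau> powr p + g \<tau> powr p)"
        by simp
      finally have "(f \<tau> + g \<tau>) powr p \<le> 2 powr p * (f \<tau> powr p + g \<tau> powr p)" .
      hence "?k \<tau> * (f \<tau> + g \<tau>) powr p \<le> ?k \<tau> * (2 powr p * (f \<tau> powr p + g \<tau> powr p))"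
        using kt by (rule mult_left_mono)
      then show "norm (?k \<tau> * (f \<tau> + g \<tau>) powr p)
        \<le> norm (2 powr p * (?k \<tau> * f \<tau> powr p + ?k \<tau> * g \<tau> powr p))"
        using kt by (simp add: algebra_simps)
    qed
  qed
  have c1: "katu_int \<rho> \<alpha> \<beta> \<eta> \<kappa> a x (\<lambda>\<tau>. f \<tau> powr p) powr (1/p)
      \<le> (A / (A + b1)) * katu_int \<rho> \<alpha> \<beta> \<eta> \<kappa> a x (\<lambda>\<tau>. (f \<tau> + g \<tau>) powr p) powr (1/p)"
    unfolding katu_int_def
  proof (rule side[OF SIf SIfg knn _ _ K])
    show "0 \<le> A / (A + b1)" using Apos assms(13) by simp
    show "p > 0" using assms(3) by simp
    show "\<forall>\<tau>\<in>?S. 0 \<le> f \<tau> \<and> f \<tau> \<le> A / (A + b1) * (f \<tau> + g \<tau>) \<and> 0 \<le> f \<tau> + g \<tau>"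
    proof
      fix \<tau> assume t: "\<tau> \<in> ?S"
      have fg: "f \<tau> > 0" "g \<tau> > 0" using pos t by auto
      have b: "b1 \<le> g \<tau>" "f \<tau> \<le> A" using assms(14,15) t by auto
      have "f \<tau> * b1 \<le> A * g \<tau>"
        using b fg assms(13) by (intro mult_mono) auto
      hence "f \<tau> * (A + b1) \<le> A * (f \<tau> + g \<tau>)" by (simp add: algebra_simps)
      hence "f \<tau> \<le> A / (A + b1) * (f \<tau> + g \<tau>)"
        using Apos assms(13) by (simp add: field_simps)
      then show "0 \<le> f \<tau> \<and> f \<tau> \<le> A / (A + b1) * (f \<tau> + g \<tau>) \<and> 0 \<le> f \<tau> + g \<tau>"
        using fg by simp
    qed
  qed
  have c2: "katu_int \<rho> \<alpha> \<beta> \<eta> \<kappa> a x (\<lambda>\<tau>. g \<tau> powr p) powr (1/p)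
      \<le> (B / (a1 + B)) * katu_int \<rho> \<alpha> \<beta> \<eta> \<kappa> a x (\<lambda>\<tau>. (f \<tau> + g \<tau>) powr p) powr (1/p)"
    unfolding katu_int_def
  proof (rule side[OF SIg SIfg knn _ _ K])
    show "0 \<le> B / (a1 + B)" using Bpos assms(12) by simp
    show "p > 0" using assms(3) by simp
    show "\<forall>\<tau>\<in>?S. 0 \<le> g \<tau> \<and> g \<tau> \<le> B / (a1 + B) * (f \<tau> + g \<tau>) \<and> 0 \<le> f \<tau> + g \<tau>"
    proof
      fix \<tau> assume t: "\<tau> \<in> ?S"
      have fg: "f \<tau> > 0" "g \<tau> > 0" using pos t by auto
      have b: "a1 \<le> f \<tau>" "g \<tau> \<le> B" using assms(14,15) t by auto
      have "g \<tau> * a1 \<le> B * f \<tau>"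
        using b fg assms(12) by (intro mult_mono) auto
      hence "g \<tau> * (a1 + B) \<le> B * (f \<tau> + g \<tau>)" by (simp add: algebra_simps)
      hence "g \<tau> \<le> B / (a1 + B) * (f \<tau> + g \<tau>)"
        using Bpos assms(12) by (simp add: field_simps)
      then show "0 \<le> g \<tau> \<and> g \<tau> \<le> B / (a1 + B) * (f \<tau> + g \<tau>) \<and> 0 \<le> f \<tau> + g \<tau>"
        using fg by simp
    qed
  qed
  have eqc: "(A * (a1 + B) + B * (A + b1)) / ((A + b1) * (a1 + B)) = A / (A + b1) + B / (a1 + B)"
    using Apos Bpos assms(12,13) by (simp add: field_simps)
  show ?thesis unfolding eqc using c1 c2 by (simp add: algebra_simps)
qed

end
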